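(* Let $f:\mathbb{R}^n\times\mathbb{R}^m\to\mathbb{R}$ be twice continuously differentiable, $\mu$-strongly convex in $x$ for every fixed $y$ and $\mu$-strongly concave in $y$ for every fixed $x$ ($\mu>0$). Write $z=(x;y)$ and $F(z)=(\nabla_x f(x,y);-\nabla_y f(x,y))$. Assume the largest singular value of the Jacobian $\nabla F(z)$ is at most $L$ for all $z$, and that $\|\nabla F(z)-\nabla F(z')\|\le L_2\|z-z'\|$ for all $z,z'$. Let $m(z)=\frac12\|F(z)\|^2$. Fix $z^0$, let $\mathcal{Z}=\{z: m(z)\le m(z^0)\}$ and $D=\max\{\|z-z^0\|: z\in\mathcal{Z}\}$. Then for all $z,z'\in\mathcal{Z}$, $$\|\nabla m(z)-\nabla m(z')\|\le L_m\|z-z'\|\qquad\text{with } L_m=L^2+L_2LD.$$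
   Context: $\|\cdot\|$ denotes the Euclidean norm for vectors and the largest singular value for matrices. $\nabla m(z)=\nabla F(z)^\top F(z)$. *)

theory Defs
  imports "HOL-Analysis.Analysis"
begin

definition strongly_convex_on :: "real \<Rightarrow> 'a::real_normed_vector set \<Rightarrow> ('a \<Rightarrow> real) \<Rightarrow> bool" where
  "strongly_convex_on \<mu> S g \<longleftrightarrow> convex S \<and>
     (\<forall>x\<in>S. \<forall>y\<in>S. \<forall>t::real. 0 \<le> t \<and> t \<le> 1 \<longrightarrow>
        g ((1 - t) *\<^sub>R x + t *\<^sub>R y) \<le> (1 - t) * g x + t * g y - \<mu> / 2 * t * (1 - t) * (norm (x - y))\<^sup>2)"

definition strongly_concave_on :: "real \<Rightarrow> 'a::real_normed_vector set \<Rightarrow> ('a \<Rightarrow> real) \<Rightarrow> bool" where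
  "strongly_concave_on \<mu> S g \<longleftrightarrow> strongly_convex_on \<mu> S (\<lambda>x. - g x)"

end

theory Submission
  imports Defs
begin

lemma first_order_aux:
  fixes \<phi> :: "real \<Rightarrow> real"
  assumes le: "\<And>t. 0 \<le> t \<Longrightarrow> t \<le> 1 \<Longrightarrow> \<phi> t \<le> (1-t)*\<phi> 0 + t*B - a*t*(1-t)*N"
    and der: "(\<phi> has_real_derivative l) (at 0)"
  shows "l \<le> B - \<phi> 0 - a*N"
proof (rule ccontr)
  assume nt: "\<not> ?thesis"
  define chi where "chi t = \<phi> t - (1-t)*\<phi> 0 - t*B + a*t*(1-t)*N" for t
  have "(chi has_real_derivative (l + \<phi> 0 - B + a*N)) (at 0)"
    unfolding chi_def by (rule derivative_eq_intros der refl | simp)+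
  moreover have "0 < l + \<phi> 0 - B + a*N" using nt by simp
  ultimately obtain d where d: "d > 0" "\<And>h. h > 0 \<Longrightarrow> h < d \<Longrightarrow> chi 0 < chi (0 + h)"
    using DERIV_pos_inc_right by blast
  define h where "h = min (d/2) 1"
  have h: "h > 0" "h < d" "h \<le> 1" using d(1) by (auto simp: h_def)
  have "chi 0 < chi h" using d(2)[OF h(1,2)] by simp
  moreover have "chi 0 = 0" by (simp add: chi_def)
  moreover have "chi h \<le> 0" using le[of h] h by (simp add: chi_def)
  ultimately show False by simp
qed

lemma path_deriv:
  assumes "(g has_derivative g') (at a)"
  shows "((\<lambda>t::real. g (a + t *\<^sub>R v)) has_derivative (\<lambda>h. g' (h *\<^sub>R v))) (at 0)"
proof -
  have p: "((\<lambda>t::real. a + t *\<^sub>R v) has_derivative (\<lambda>h. h *\<^sub>R v)) (at 0)"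
    by (rule derivative_eq_intros refl | simp)+
  have "(g has_derivative g') (at ((\<lambda>t::real. a + t *\<^sub>R v) 0))" using assms by simp
  from diff_chain_at[OF p this] show ?thesis by (simp add: o_def)
qed

lemma path_real_deriv:
  assumes "\<And>z. (f has_derivative (\<lambda>h. G z \<bullet> h)) (at z)"
  shows "((\<lambda>t::real. f (a + t *\<^sub>R v)) has_real_derivative (G a \<bullet> v)) (at 0)"
  by (rule has_derivative_imp_has_field_derivative[OF path_deriv[OF assms]]) simp

theorem lemma2p4:
  fixes f :: "(real ^ 'n) \<times> (real ^ 'm) \<Rightarrow> real"
    and G :: "(real ^ 'n) \<times> (real ^ 'm) \<Rightarrow> (real ^ 'n) \<times> (real ^ 'm)"
    and DF :: "(real ^ 'n) \<times> (real ^ 'm) \<Rightarrow> ((real ^ 'n) \<times> (real ^ 'm)) \<Rightarrow>\<^sub>L ((real ^ 'n) \<times> (real ^ 'm))"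
    and F :: "(real ^ 'n) \<times> (real ^ 'm) \<Rightarrow> (real ^ 'n) \<times> (real ^ 'm)"
    and m :: "(real ^ 'n) \<times> (real ^ 'm) \<Rightarrow> real"
    and \<mu> L L2 :: real
    and z0 :: "(real ^ 'n) \<times> (real ^ 'm)"
  assumes grad_f: "\<And>z. (f has_derivative (\<lambda>h. G z \<bullet> h)) (at z)"
    and F_def: "\<And>z. F z = (fst (G z), - snd (G z))"
    and DF_deriv: "\<And>z. (F has_derivative blinfun_apply (DF z)) (at z)"
    and DF_cont: "continuous_on UNIV DF"
    and mu_pos: "\<mu> > 0"
    and sconvex: "\<And>y. strongly_convex_on \<mu> UNIV (\<lambda>x. f (x, y))"
    and sconcave: "\<And>x. strongly_concave_on \<mu> UNIV (\<lambda>y. f (x, y))"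
    and L_bound: "\<And>z. norm (DF z) \<le> L"
    and L2_lip: "\<And>z z'. norm (DF z - DF z') \<le> L2 * norm (z - z')"
    and m_def: "\<And>z. m z = 1/2 * (norm (F z))\<^sup>2"
  shows "\<forall>z \<in> {z. m z \<le> m z0}. \<forall>z' \<in> {z. m z \<le> m z0}.
           norm (adjoint (blinfun_apply (DF z)) (F z) - adjoint (blinfun_apply (DF z')) (F z'))
             \<le> (L\<^sup>2 + L2 * L * (SUP z \<in> {z. m z \<le> m z0}. norm (z - z0))) * norm (z - z')"
proof -
  have conv: "fst (G (x,y)) \<bullet> (x' - x) \<le> f (x',y) - f (x,y) - \<mu>/2 * (norm (x - x'))\<^sup>2" for x x' y
  proof -
    define \<phi> where "\<phi> t = f ((x,y) + t *\<^sub>R (x' - x, 0))" for t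
    have all: "\<forall>a\<in>UNIV. \<forall>b\<in>UNIV. \<forall>t::real. 0 \<le> t \<and> t \<le> 1 \<longrightarrow>
        f ((1 - t) *\<^sub>R a + t *\<^sub>R b, y) \<le> (1 - t) * f (a, y) + t * f (b, y) - \<mu> / 2 * t * (1 - t) * (norm (a - b))\<^sup>2"
      using sconvex[of y] unfolding strongly_convex_on_def by blast
    have le: "\<phi> t \<le> (1-t)*\<phi> 0 + t*f(x',y) - \<mu>/2*t*(1-t)*(norm(x-x'))\<^sup>2" if "0\<le>t" "t\<le>1" for t
    proof -
      have "(x,y) + t *\<^sub>R (x'-x, 0) = ((1-t)*\<^sub>R x + t *\<^sub>R x', y)" by (simp add: algebra_simps)
      then show ?thesis using all that unfolding \<phi>_def by auto
    qed
    have "(\<phi> has_real_derivative (G (x,y) \<bullet> (x'-x,0))) (at 0)"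
      unfolding \<phi>_def by (rule path_real_deriv[OF grad_f])
    from first_order_aux[OF le this] show ?thesis by (simp add: inner_Pair_0 \<phi>_def)
  qed
  have conc: "- (snd (G (x,y)) \<bullet> (y' - y)) \<le> - f (x,y') + f (x,y) - \<mu>/2 * (norm (y - y'))\<^sup>2" for x y y'
  proof -
    define \<phi> where "\<phi> t = - f ((x,y) + t *\<^sub>R (0, y' - y))" for t
    have all: "\<forall>a\<in>UNIV. \<forall>b\<in>UNIV. \<forall>t::real. 0 \<le> t \<and> t \<le> 1 \<longrightarrow>
        - f (x, (1 - t) *\<^sub>R a + t *\<^sub>R b) \<le> (1 - t) * - f (x, a) + t * - f (x, b) - \<mu> / 2 * t * (1 - t) * (norm (a - b))\<^sup>2"
      using sconcave[of x] unfolding strongly_concave_on_def strongly_convex_on_def by blast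
    have le: "\<phi> t \<le> (1-t)*\<phi> 0 + t*(- f(x,y')) - \<mu>/2*t*(1-t)*(norm(y-y'))\<^sup>2" if "0\<le>t" "t\<le>1" for t
    proof -
      have "(x,y) + t *\<^sub>R (0, y'-y) = (x, (1-t)*\<^sub>R y + t *\<^sub>R y')" by (simp add: algebra_simps)
      then show ?thesis using all that unfolding \<phi>_def by auto
    qed
    have "(\<phi> has_real_derivative - (G (x,y) \<bullet> (0, y'-y))) (at 0)"
      unfolding \<phi>_def by (rule DERIV_minus[OF path_real_deriv[OF grad_f]])
    from first_order_aux[OF le this] show ?thesis by (simp add: inner_Pair_0 \<phi>_def)
  qed
  have mono: "\<mu> * (norm (z - z'))\<^sup>2 \<le> (F z - F z') \<bullet> (z - z')" for z z'
  proof -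
    obtain x y where z: "z = (x,y)" by (cases z)
    obtain x' y' where z': "z' = (x',y')" by (cases z')
    define gx where "gx = fst (G (x,y))"
    define gy where "gy = snd (G (x,y))"
    define gx' where "gx' = fst (G (x',y'))"
    define gy' where "gy' = snd (G (x',y'))"
    have c1: "gx \<bullet> (x' - x) \<le> f (x',y) - f (x,y) - \<mu>/2 * (norm (x - x'))\<^sup>2" using conv unfolding gx_def .
    have c2: "gx' \<bullet> (x - x') \<le> f (x,y') - f (x',y') - \<mu>/2 * (norm (x' - x))\<^sup>2" using conv unfolding gx'_def .
    have c3: "- (gy \<bullet> (y' - y)) \<le> - f (x,y') + f (x,y) - \<mu>/2 * (norm (y - y'))\<^sup>2" using conc unfolding gy_def .
    have c4: "- (gy' \<bullet> (y - y')) \<le> - f (x',y) + f (x',y') - \<mu>/2 * (norm (y' - y))\<^sup>2" using conc unfolding gy'_def .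
    have n1: "norm (x' - x) = norm (x - x')" "norm (y' - y) = norm (y - y')" by (simp_all add: norm_minus_commute)
    have i1: "gx \<bullet> (x' - x) = - (gx \<bullet> (x - x'))" "gy \<bullet> (y' - y) = - (gy \<bullet> (y - y'))"
      by (simp_all add: inner_diff_right)
    have eq: "(F z - F z') \<bullet> (z - z') = gx \<bullet> (x - x') - gx' \<bullet> (x - x') - gy \<bullet> (y - y') + gy' \<bullet> (y - y')"
      by (simp add: z z' F_def gx_def gy_def gx'_def gy'_def inner_diff_left)
    have nn: "(norm (z - z'))\<^sup>2 = (norm (x - x'))\<^sup>2 + (norm (y - y'))\<^sup>2"
      by (simp add: z z' norm_Pair)
    show ?thesis unfolding eq nn using c1 c2 c3 c4 n1 i1 by (simp add: algebra_simps)
  qed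
  have Flip: "norm (F z - F z') \<le> L * norm (z - z')" for z z'
  proof -
    have "norm (F z - F z') \<le> L * norm (z - z')"
      by (rule differentiable_bound[of UNIV F "\<lambda>z. blinfun_apply (DF z)" L])
         (auto intro: has_derivative_at_withinI DF_deriv simp: norm_blinfun.rep_eq[symmetric] L_bound)
    then show ?thesis .
  qed
  define Z where "Z = {z. m z \<le> m z0}"
  have L0: "0 \<le> L" using L_bound[of z0] norm_ge_zero[of "DF z0"] by linarith
  have Fle: "norm (F z) \<le> norm (F z0)" if "z \<in> Z" for z
  proof -
    have "m z \<le> m z0" using that unfolding Z_def by simp
    then have "(norm (F z))\<^sup>2 \<le> (norm (F z0))\<^sup>2" unfolding m_def by simp
    then show ?thesis by (rule power2_le_imp_le) simp
  qed
  have bnd: "norm (z - z0) \<le> 2 * norm (F z0) / \<mu>" if "z \<in> Z" for z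
  proof (cases "z = z0")
    case True then show ?thesis using mu_pos by simp
  next
    case False
    have "\<mu> * (norm (z - z0))\<^sup>2 \<le> norm (F z - F z0) * norm (z - z0)"
      using mono[of z z0] norm_cauchy_schwarz[of "F z - F z0" "z - z0"] by linarith
    also have "\<dots> \<le> (2 * norm (F z0)) * norm (z - z0)"
      using Fle[OF that] norm_triangle_ineq4[of "F z" "F z0"] by (intro mult_right_mono) auto
    finally have "\<mu> * norm (z - z0) \<le> 2 * norm (F z0)" using False by (simp add: power2_eq_square)
    then show ?thesis using mu_pos by (simp add: field_simps)
  qed
  have contF: "continuous_on UNIV F"
    using DF_deriv by (meson continuous_at_imp_continuous_on has_derivative_continuous)
  have mfun: "m = (\<lambda>z. 1/2 * (norm (F z))\<^sup>2)" by (rule ext) (simp add: m_def)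
  have contm: "continuous_on UNIV m" unfolding mfun by (intro continuous_intros contF)
  have closedZ: "closed Z" unfolding Z_def
    by (rule closed_Collect_le[OF contm continuous_on_const])
  have boundedZ: "bounded Z"
  proof (rule bounded_subset[OF bounded_cball[of z0 "2 * norm (F z0) / \<mu>"]])
    show "Z \<subseteq> cball z0 (2 * norm (F z0) / \<mu>)" using bnd by (auto simp: dist_norm norm_minus_commute)
  qed
  have "compact Z" using closedZ boundedZ by (simp add: compact_eq_bounded_closed)
  moreover have "Z \<noteq> {}" unfolding Z_def by blast
  ultimately obtain zs where zs: "zs \<in> Z" "\<And>y. y \<in> Z \<Longrightarrow> m zs \<le> m y"
    using continuous_attains_inf[of Z m] continuous_on_subset[OF contm] by blast
  have zmin: "m zs \<le> m y" for y
  proof (cases "y \<in> Z")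
    case True then show ?thesis using zs by blast
  next
    case False then show ?thesis using zs(1) by (auto simp: Z_def)
  qed
  define Fs where "Fs = F zs"
  have mder: "(m has_derivative (\<lambda>h. 1/2 * (F zs \<bullet> DF zs h + DF zs h \<bullet> F zs))) (at zs)"
  proof -
    have mfun2: "m = (\<lambda>z. 1/2 * (F z \<bullet> F z))" by (rule ext) (simp add: m_def power2_norm_eq_inner)
    show ?thesis unfolding mfun2 by (intro derivative_intros DF_deriv)
  qed
  have "(\<lambda>h. 1/2 * (F zs \<bullet> DF zs h + DF zs h \<bullet> F zs)) = (\<lambda>h. 0)"
    by (rule has_derivative_local_min[OF mder]) (simp add: zmin)
  then have "1/2 * (F zs \<bullet> DF zs Fs + DF zs Fs \<bullet> F zs) = 0" by (rule fun_cong)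
  then have d0: "DF zs Fs \<bullet> Fs = 0" by (simp add: Fs_def inner_commute)
  have Fs0: "Fs = 0"
  proof (rule ccontr)
    assume ne: "Fs \<noteq> 0"
    define chi where "chi t = F (zs + t *\<^sub>R Fs) \<bullet> Fs - Fs \<bullet> Fs - \<mu>/2 * t * (Fs \<bullet> Fs)" for t
    have pd: "((\<lambda>t::real. F (zs + t *\<^sub>R Fs)) has_derivative (\<lambda>h. DF zs (h *\<^sub>R Fs))) (at 0)"
      by (rule path_deriv[OF DF_deriv])
    have "(chi has_derivative (\<lambda>h. DF zs (h *\<^sub>R Fs) \<bullet> Fs - \<mu>/2 * h * (Fs \<bullet> Fs))) (at 0)"
      unfolding chi_def by (rule derivative_eq_intros pd refl | simp)+
    then have "(chi has_real_derivative (- \<mu>/2 * (Fs \<bullet> Fs))) (at 0)"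
      by (rule has_derivative_imp_has_field_derivative) (simp add: blinfun.scaleR_right d0)
    moreover have "- \<mu>/2 * (Fs \<bullet> Fs) < 0" using ne mu_pos by simp
    ultimately obtain d where d: "d > 0" "\<And>h. h > 0 \<Longrightarrow> h < d \<Longrightarrow> chi (0 + h) < chi 0"
      using DERIV_neg_dec_right by blast
    define h where "h = d/2"
    have h: "h > 0" "h < d" using d by (auto simp: h_def)
    have c1: "chi h < 0" using d(2)[OF h] by (simp add: chi_def Fs_def)
    have A: "\<mu> * (norm (h *\<^sub>R Fs))\<^sup>2 \<le> (F (zs + h *\<^sub>R Fs) - Fs) \<bullet> (h *\<^sub>R Fs)"
      using mono[of "zs + h *\<^sub>R Fs" zs] by (simp add: Fs_def)
    have B: "(norm (h *\<^sub>R Fs))\<^sup>2 = h * h * (Fs \<bullet> Fs)"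
      by (simp only: power2_norm_eq_inner inner_scaleR_left inner_scaleR_right mult.assoc)
    have C: "(F (zs + h *\<^sub>R Fs) - Fs) \<bullet> (h *\<^sub>R Fs) = h * (F (zs + h *\<^sub>R Fs) \<bullet> Fs - Fs \<bullet> Fs)"
      by (simp add: inner_diff_left algebra_simps)
    have "\<mu> * (h * h * (Fs \<bullet> Fs)) \<le> h * (F (zs + h *\<^sub>R Fs) \<bullet> Fs - Fs \<bullet> Fs)"
      using A unfolding B C .
    moreover have "\<mu> * (h * h * (Fs \<bullet> Fs)) = h * (\<mu> * h * (Fs \<bullet> Fs))" by (simp add: algebra_simps)
    ultimately have "h * (\<mu> * h * (Fs \<bullet> Fs)) \<le> h * (F (zs + h *\<^sub>R Fs) \<bullet> Fs - Fs \<bullet> Fs)" by simp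
    then have "\<mu> * h * (Fs \<bullet> Fs) \<le> F (zs + h *\<^sub>R Fs) \<bullet> Fs - Fs \<bullet> Fs"
      by (rule mult_left_le_imp_le) (use h(1) in simp)
    moreover have "0 < \<mu> * h * (Fs \<bullet> Fs)" using h mu_pos ne by simp
    ultimately have "chi h > 0" by (simp add: chi_def)
    then show False using c1 by simp
  qed
  define D where "D = (SUP z \<in> Z. norm (z - z0))"
  have bdd: "bdd_above ((\<lambda>z. norm (z - z0)) ` Z)" by (rule bdd_aboveI2[OF bnd])
  have Dub: "norm (z - z0) \<le> D" if "z \<in> Z" for z unfolding D_def by (rule cSUP_upper[OF that bdd])
  have D0: "0 \<le> D" using Dub[of z0] by (simp add: Z_def)
  have Fz0: "norm (F z0) \<le> L * D"
  proof -
    have "norm (F z0) = norm (F z0 - F zs)" using Fs0 by (simp add: Fs_def)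
    also have "\<dots> \<le> L * norm (z0 - zs)" by (rule Flip)
    also have "\<dots> \<le> L * D" using Dub[OF zs(1)] L0 by (intro mult_left_mono) (auto simp: norm_minus_commute)
    finally show ?thesis .
  qed
  have main: "norm (adjoint (blinfun_apply (DF z)) (F z) - adjoint (blinfun_apply (DF z')) (F z'))
             \<le> (L\<^sup>2 + L2 * L * D) * norm (z - z')" if zZ: "z \<in> Z" and z'Z: "z' \<in> Z" for z z'
  proof -
    define w where "w = adjoint (blinfun_apply (DF z)) (F z) - adjoint (blinfun_apply (DF z')) (F z')"
    define nd where "nd = norm (z - z')"
    define nw where "nw = norm w"
    have lin: "linear (blinfun_apply A)" for A :: "((real ^ 'n) \<times> (real ^ 'm)) \<Rightarrow>\<^sub>L ((real ^ 'n) \<times> (real ^ 'm))"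
      by (simp add: blinfun.bounded_linear_right bounded_linear.linear)
    have "nw\<^sup>2 = w \<bullet> w" by (simp add: nw_def power2_norm_eq_inner)
    also have "\<dots> = F z \<bullet> DF z w - F z' \<bullet> DF z' w"
      by (simp add: w_def inner_diff_left adjoint_clauses(2)[OF lin])
    also have "\<dots> = (F z - F z') \<bullet> DF z w + F z' \<bullet> ((DF z - DF z') w)"
      by (simp add: inner_diff_left inner_diff_right blinfun.diff_left)
    also have "\<dots> \<le> (L * nd) * (L * nw) + (L * D) * ((L2 * nd) * nw)"
    proof -
      have a1: "(F z - F z') \<bullet> DF z w \<le> norm (F z - F z') * norm (DF z w)" by (rule norm_cauchy_schwarz)
      have a2: "norm (DF z w) \<le> L * nw"
        using norm_blinfun[of "DF z" w] L_bound[of z] mult_right_mono[of "norm (DF z)" L nw]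
        by (simp add: nw_def)
      have a3: "norm (F z - F z') * norm (DF z w) \<le> (L * nd) * (L * nw)"
        using Flip[of z z'] a2 L0 by (intro mult_mono) (auto simp: nd_def)
      have b1: "F z' \<bullet> ((DF z - DF z') w) \<le> norm (F z') * norm ((DF z - DF z') w)" by (rule norm_cauchy_schwarz)
      have b2: "norm ((DF z - DF z') w) \<le> (L2 * nd) * nw"
        using norm_blinfun[of "DF z - DF z'" w] L2_lip[of z z'] mult_right_mono[of "norm (DF z - DF z')" "L2 * nd" nw]
        by (simp add: nw_def nd_def)
      have b3: "norm (F z') \<le> L * D" using Fle[OF z'Z] Fz0 by linarith
      have b4: "norm (F z') * norm ((DF z - DF z') w) \<le> (L * D) * ((L2 * nd) * nw)"
        using b2 b3 by (intro mult_mono) (auto intro: order_trans[OF norm_ge_zero])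
      show ?thesis using a1 a3 b1 b4 by linarith
    qed
    also have "\<dots> = ((L\<^sup>2 + L2 * L * D) * nd) * nw" by (simp add: algebra_simps power2_eq_square)
    finally have key: "nw * nw \<le> ((L\<^sup>2 + L2 * L * D) * nd) * nw" by (simp add: power2_eq_square)
    have L2nd: "0 \<le> L2 * nd" using order_trans[OF norm_ge_zero L2_lip[of z z']] by (simp add: nd_def)
    have rhs0: "0 \<le> (L\<^sup>2 + L2 * L * D) * nd"
    proof -
      have "0 \<le> L\<^sup>2 * nd" by (simp add: nd_def)
      moreover have "0 \<le> L * D * (L2 * nd)" using L0 D0 L2nd by simp
      ultimately show ?thesis by (simp add: algebra_simps)
    qed
    have "nw \<le> (L\<^sup>2 + L2 * L * D) * nd"
    proof (cases "nw = 0")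
      case True then show ?thesis using rhs0 by simp
    next
      case False then have "nw > 0" by (simp add: nw_def)
      then show ?thesis using key by simp
    qed
    then show ?thesis by (simp add: nw_def nd_def w_def)
  qed
  show ?thesis using main unfolding Z_def D_def by blast
qed

end
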